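(* Let $n\geq 1$. No automorphism of a thick building of type $\mathsf{A}_n\times\mathsf{A}_n$ that interchanges the two components and acts as an involution on the type set is domestic.
   Context: A building of type $\mathsf{A}_n\times\mathsf{A}_n$ is a product of two buildings of type $\mathsf{A}_n$; its type set is the disjoint union of the two type sets, and an automorphism is a simplicial automorphism, inducing a permutation of the type set. Chambers are opposite if they are at maximal gallery distance; an automorphism is domestic if it maps no chamber to an opposite chamber. *)

theory Defs
  imports "HOL-Combinatorics.Permutations"
begin

text \<open>The Coxeter system of type A_n: W = Sym({0..n}) (permutations of {..n}),
  product = composition, generators s_i = transposition (i, i+1) for i < n,
  length = number of inversions, longest element w0 = (k \<mapsto> n - k).\<close>

definition sgen :: "nat \<Rightarrow> nat \<Rightarrow> nat" where
  "sgen i = (\<lambda>k. if k = i then Suc i else if k = Suc i then i else k)"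

definition inv_count :: "nat \<Rightarrow> (nat \<Rightarrow> nat) \<Rightarrow> nat" where
  "inv_count n p = card {(i, j). i < j \<and> j \<le> n \<and> p j < p i}"

definition w0 :: "nat \<Rightarrow> nat \<Rightarrow> nat" where
  "w0 n = (\<lambda>k. if k \<le> n then n - k else k)"

text \<open>Building of type A_n as a W-metric building (Abramenko--Brown, Def. 5.1):
  chamber set C, Weyl distance \<delta>.\<close>

definition building_An :: "nat \<Rightarrow> 'c set \<Rightarrow> ('c \<Rightarrow> 'c \<Rightarrow> nat \<Rightarrow> nat) \<Rightarrow> bool" where
  "building_An n C \<delta> \<longleftrightarrow>
     C \<noteq> {} \<and>
     (\<forall>x\<in>C. \<forall>y\<in>C. \<delta> x y permutes {..n}) \<and>
     (\<forall>x\<in>C. \<forall>y\<in>C. \<delta> x y = id \<longleftrightarrow> x = y) \<and>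
     (\<forall>x\<in>C. \<forall>y\<in>C. \<forall>z\<in>C. \<forall>i<n. \<delta> z x = sgen i \<longrightarrow>
        ((\<delta> z y = sgen i \<circ> \<delta> x y \<or> \<delta> z y = \<delta> x y) \<and>
         (inv_count n (sgen i \<circ> \<delta> x y) = Suc (inv_count n (\<delta> x y))
            \<longrightarrow> \<delta> z y = sgen i \<circ> \<delta> x y))) \<and>
     (\<forall>x\<in>C. \<forall>y\<in>C. \<forall>i<n. \<exists>z\<in>C. \<delta> z x = sgen i \<and> \<delta> z y = sgen i \<circ> \<delta> x y)"

text \<open>Thick: every panel contains at least three chambers.\<close>
definition thick_An :: "nat \<Rightarrow> 'c set \<Rightarrow> ('c \<Rightarrow> 'c \<Rightarrow> nat \<Rightarrow> nat) \<Rightarrow> bool" where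
  "thick_An n C \<delta> \<longleftrightarrow>
     (\<forall>x\<in>C. \<forall>i<n. \<exists>y\<in>C. \<exists>z\<in>C. y \<noteq> z \<and> \<delta> x y = sgen i \<and> \<delta> x z = sgen i)"

definition prod_types :: "nat \<Rightarrow> (nat + nat) set" where
  "prod_types n = Inl ` {..<n} \<union> Inr ` {..<n}"

fun prod_adj :: "('a \<Rightarrow> 'a \<Rightarrow> nat \<Rightarrow> nat) \<Rightarrow> ('b \<Rightarrow> 'b \<Rightarrow> nat \<Rightarrow> nat) \<Rightarrow> nat + nat
                  \<Rightarrow> 'a \<times> 'b \<Rightarrow> 'a \<times> 'b \<Rightarrow> bool" where
  "prod_adj \<delta>1 \<delta>2 (Inl i) x y \<longleftrightarrow> \<delta>1 (fst x) (fst y) \<in> {id, sgen i} \<and> snd x = snd y"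
| "prod_adj \<delta>1 \<delta>2 (Inr i) x y \<longleftrightarrow> \<delta>2 (snd x) (snd y) \<in> {id, sgen i} \<and> fst x = fst y"

definition prod_opp :: "nat \<Rightarrow> ('a \<Rightarrow> 'a \<Rightarrow> nat \<Rightarrow> nat) \<Rightarrow> ('b \<Rightarrow> 'b \<Rightarrow> nat \<Rightarrow> nat)
                  \<Rightarrow> 'a \<times> 'b \<Rightarrow> 'a \<times> 'b \<Rightarrow> bool" where
  "prod_opp n \<delta>1 \<delta>2 x y \<longleftrightarrow> \<delta>1 (fst x) (fst y) = w0 n \<and> \<delta>2 (snd x) (snd y) = w0 n"

definition prod_aut :: "nat \<Rightarrow> 'a set \<Rightarrow> ('a \<Rightarrow> 'a \<Rightarrow> nat \<Rightarrow> nat) \<Rightarrow> 'b set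
     \<Rightarrow> ('b \<Rightarrow> 'b \<Rightarrow> nat \<Rightarrow> nat) \<Rightarrow> ('a \<times> 'b \<Rightarrow> 'a \<times> 'b) \<Rightarrow> (nat + nat \<Rightarrow> nat + nat) \<Rightarrow> bool" where
  "prod_aut n C1 \<delta>1 C2 \<delta>2 \<phi> \<sigma> \<longleftrightarrow>
     bij_betw \<phi> (C1 \<times> C2) (C1 \<times> C2) \<and> \<sigma> permutes prod_types n \<and>
     (\<forall>x\<in>C1 \<times> C2. \<forall>y\<in>C1 \<times> C2. \<forall>t\<in>prod_types n.
        prod_adj \<delta>1 \<delta>2 t x y \<longleftrightarrow> prod_adj \<delta>1 \<delta>2 (\<sigma> t) (\<phi> x) (\<phi> y))"

definition prod_domestic :: "nat \<Rightarrow> 'a set \<Rightarrow> ('a \<Rightarrow> 'a \<Rightarrow> nat \<Rightarrow> nat) \<Rightarrow> 'b set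
     \<Rightarrow> ('b \<Rightarrow> 'b \<Rightarrow> nat \<Rightarrow> nat) \<Rightarrow> ('a \<times> 'b \<Rightarrow> 'a \<times> 'b) \<Rightarrow> bool" where
  "prod_domestic n C1 \<delta>1 C2 \<delta>2 \<phi> \<longleftrightarrow> (\<forall>x\<in>C1 \<times> C2. \<not> prod_opp n \<delta>1 \<delta>2 x (\<phi> x))"

end

theory Submission
  imports Defs
begin


definition Inv :: "nat \<Rightarrow> (nat \<Rightarrow> nat) \<Rightarrow> (nat \<times> nat) set" where
  "Inv n p = {(i, j). i < j \<and> j \<le> n \<and> p j < p i}"

definition Allp :: "nat \<Rightarrow> (nat \<times> nat) set" where
  "Allp n = {(i, j). i < j \<and> j \<le> n}"

lemma Allp_fin: "finite (Allp n)"
  by (rule finite_subset[of _ "{..n} \<times> {..n}"]) (auto simp: Allp_def)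

lemma Inv_sub: "Inv n p \<subseteq> Allp n" by (auto simp: Inv_def Allp_def)

lemma Inv_fin: "finite (Inv n p)" by (rule finite_subset[OF Inv_sub Allp_fin])

lemma ic_def: "inv_count n p = card (Inv n p)" by (simp add: inv_count_def Inv_def)

lemma sgen_transpose: "sgen i = transpose i (Suc i)"
  by (auto simp: sgen_def transpose_def fun_eq_iff)

lemma sgen_perm: "i < n \<Longrightarrow> sgen i permutes {..n}"
  unfolding sgen_transpose by (rule permutes_swap_id) auto

lemma sgen_sgen: "sgen i \<circ> sgen i = id"
  by (auto simp: sgen_def fun_eq_iff)

lemma sgen_sgen': "sgen i \<circ> (sgen i \<circ> p) = p"
  by (auto simp: sgen_def fun_eq_iff)

lemma sgen_ne_id: "sgen i \<noteq> id"
  by (auto simp: sgen_def fun_eq_iff intro!: exI[of _ i])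

lemma sgen_ord: "u \<noteq> v \<Longrightarrow> \<not> (u = i \<and> v = Suc i) \<Longrightarrow> \<not> (u = Suc i \<and> v = i)
   \<Longrightarrow> (sgen i v < sgen i u \<longleftrightarrow> v < u)"
  by (auto simp: sgen_def)

lemma len_step:
  assumes p: "p permutes {..n}" and i: "i < n"
  shows "inv_count n (sgen i \<circ> p) = Suc (inv_count n p) \<and> inv p i < inv p (Suc i)
       \<or> Suc (inv_count n (sgen i \<circ> p)) = inv_count n p \<and> inv p (Suc i) < inv p i"
proof -
  define a0 where "a0 = inv p i"
  define b0 where "b0 = inv p (Suc i)"
  have pa: "p a0 = i" and pb: "p b0 = Suc i" using permutes_inverses[OF p] a0_def b0_def by auto
  have a0n: "a0 \<le> n" and b0n: "b0 \<le> n"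
    using permutes_in_image[OF p, of a0] permutes_in_image[OF p, of b0] pa pb i by auto
  have ab: "a0 \<noteq> b0" using pa pb by auto
  have key: "\<And>a b. a < b \<Longrightarrow> b \<le> n \<Longrightarrow> (a, b) \<noteq> (a0, b0) \<Longrightarrow> (a, b) \<noteq> (b0, a0) \<Longrightarrow>
      (sgen i (p b) < sgen i (p a) \<longleftrightarrow> p b < p a)"
  proof -
    fix a b assume h: "a < b" "b \<le> n" "(a, b) \<noteq> (a0, b0)" "(a, b) \<noteq> (b0, a0)"
    have inj: "inj p" using permutes_inj[OF p] .
    have "p a \<noteq> p b" using h inj by (metis inj_eq less_irrefl)
    moreover have "\<not> (p a = i \<and> p b = Suc i)" using h pa pb inj by (metis inj_eq)
    moreover have "\<not> (p a = Suc i \<and> p b = i)" using h pa pb inj by (metis inj_eq)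
    ultimately show "(sgen i (p b) < sgen i (p a) \<longleftrightarrow> p b < p a)" by (rule sgen_ord)
  qed
  show ?thesis
  proof (cases "a0 < b0")
    case True
    have inj: "inj p" using permutes_inj[OF p] .
    have "Inv n (sgen i \<circ> p) = insert (a0, b0) (Inv n p)"
    proof (rule set_eqI)
      fix x :: "nat \<times> nat"
      obtain a b where x: "x = (a, b)" by (cases x)
      show "x \<in> Inv n (sgen i \<circ> p) \<longleftrightarrow> x \<in> insert (a0, b0) (Inv n p)"
      proof (cases "(a, b) = (a0, b0) \<or> (a, b) = (b0, a0)")
        case T: True
        then show ?thesis using x T True pa pb a0n b0n by (auto simp: Inv_def sgen_def)
      next
        case F2: False
        then show ?thesis using x key[of a b] by (auto simp: Inv_def)
      qed
    qed
    moreover have "(a0, b0) \<notin> Inv n p" using pa pb by (auto simp: Inv_def)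
    ultimately have "inv_count n (sgen i \<circ> p) = Suc (inv_count n p)"
      by (simp add: ic_def Inv_fin)
    then show ?thesis using True a0_def b0_def by simp
  next
    case False
    then have F: "b0 < a0" using ab by simp
    have inj: "inj p" using permutes_inj[OF p] .
    have "Inv n p = insert (b0, a0) (Inv n (sgen i \<circ> p))"
    proof (rule set_eqI)
      fix x :: "nat \<times> nat"
      obtain a b where x: "x = (a, b)" by (cases x)
      show "x \<in> Inv n p \<longleftrightarrow> x \<in> insert (b0, a0) (Inv n (sgen i \<circ> p))"
      proof (cases "(a, b) = (a0, b0) \<or> (a, b) = (b0, a0)")
        case T: True
        then show ?thesis using x T F pa pb a0n b0n by (auto simp: Inv_def sgen_def)
      next
        case F2: False
        then show ?thesis using x key[of a b] by (auto simp: Inv_def)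
      qed
    qed
    moreover have "(b0, a0) \<notin> Inv n (sgen i \<circ> p)" using pa pb by (auto simp: Inv_def sgen_def)
    ultimately have "Suc (inv_count n (sgen i \<circ> p)) = inv_count n p"
      by (simp add: ic_def Inv_fin)
    then show ?thesis using F a0_def b0_def by simp
  qed
qed

lemma len_step': "p permutes {..n} \<Longrightarrow> i < n \<Longrightarrow>
   inv_count n (sgen i \<circ> p) = Suc (inv_count n p) \<or> Suc (inv_count n (sgen i \<circ> p)) = inv_count n p"
  using len_step by blast

lemma incr_lemma:
  assumes "\<forall>i<n. g i < (g (Suc i) :: nat)"
  shows "k + j \<le> n \<Longrightarrow> g k + j \<le> g (k + j)"
proof (induction j)
  case (Suc j)
  then have "g k + j \<le> g (k + j)" by simp
  moreover have "g (k + j) < g (Suc (k + j))" using assms Suc.prems by simp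
  ultimately show ?case by simp
qed simp

lemma decr_lemma:
  assumes "\<forall>i<n. g (Suc i) < (g i :: nat)"
  shows "k + j \<le> n \<Longrightarrow> g (k + j) + j \<le> g k"
proof (induction j)
  case (Suc j)
  then have "g (k + j) + j \<le> g k" by simp
  moreover have "g (Suc (k + j)) < g (k + j)" using assms Suc.prems by simp
  ultimately show ?case by simp
qed simp

lemma incr_id:
  assumes g: "g permutes {..n}" and m: "\<forall>i<n. g i < g (Suc i)" and k: "k \<le> n"
  shows "g k = k"
proof -
  have "g 0 + k \<le> g k" using incr_lemma[OF m, of 0 k] k by simp
  moreover have "g k + (n - k) \<le> g n" using incr_lemma[OF m, of k "n - k"] k by simp
  moreover have "g n \<le> n" using permutes_in_image[OF g, of n] by simp
  ultimately show ?thesis by linarith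
qed

lemma decr_w0:
  assumes g: "g permutes {..n}" and m: "\<forall>i<n. g (Suc i) < g i" and k: "k \<le> n"
  shows "g k = n - k"
proof -
  have "g k + k \<le> g 0" using decr_lemma[OF m, of 0 k] k by simp
  moreover have "g n + (n - k) \<le> g k" using decr_lemma[OF m, of k "n - k"] k by simp
  moreover have "g 0 \<le> n" using permutes_in_image[OF g, of 0] by simp
  ultimately show ?thesis by linarith
qed

lemma w0_perm: "w0 n permutes {..n}"
  unfolding permutes_def w0_def
proof (intro conjI allI impI)
  fix y
  show "\<exists>!x. (if x \<le> n then n - x else x) = y"
    by (rule ex1I[of _ "if y \<le> n then n - y else y"]) (auto split: if_splits)
qed auto

lemma descent_exists:
  assumes p: "p permutes {..n}" and ne: "p \<noteq> id"
  shows "\<exists>i<n. Suc (inv_count n (sgen i \<circ> p)) = inv_count n p"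
proof (rule ccontr)
  assume "\<not> ?thesis"
  then have "\<forall>i<n. inv p i < inv p (Suc i)" using len_step[OF p] by fastforce
  then have "\<And>k. k \<le> n \<Longrightarrow> inv p k = k" using incr_id[OF permutes_inv[OF p]] by blast
  then have "p = id"
    using permutes_inverses[OF p] permutes_not_in[OF p] by (metis atMost_iff eq_id_iff)
  with ne show False by simp
qed

lemma ascent_exists:
  assumes p: "p permutes {..n}" and ne: "p \<noteq> w0 n"
  shows "\<exists>i<n. inv_count n (sgen i \<circ> p) = Suc (inv_count n p)"
proof (rule ccontr)
  assume "\<not> ?thesis"
  then have "\<forall>i<n. inv p (Suc i) < inv p i" using len_step[OF p] by fastforce
  then have h: "\<And>k. k \<le> n \<Longrightarrow> inv p k = n - k" using decr_w0[OF permutes_inv[OF p]] by blast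
  have "p x = w0 n x" for x
  proof (cases "x \<le> n")
    case True
    then have "inv p (n - x) = x" using h[of "n - x"] by simp
    then show ?thesis using permutes_inverses(1)[OF p, of "n - x"] True by (simp add: w0_def)
  next
    case False then show ?thesis using permutes_not_in[OF p, of x] by (simp add: w0_def)
  qed
  with ne show False by auto
qed

lemma len_id: "inv_count n id = 0"
proof -
  have "Inv n id = {}" by (auto simp: Inv_def)
  then show ?thesis by (simp add: ic_def)
qed

lemma len0: "p permutes {..n} \<Longrightarrow> inv_count n p = 0 \<Longrightarrow> p = id"
  using descent_exists by fastforce

lemma len_le: "inv_count n p \<le> card (Allp n)"
  by (simp add: ic_def Allp_fin Inv_sub card_mono)

lemma len_w0: "inv_count n (w0 n) = card (Allp n)"
proof -
  have "Inv n (w0 n) = Allp n" by (auto simp: Inv_def Allp_def w0_def)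
  then show ?thesis by (simp add: ic_def)
qed

lemma len_max:
  assumes p: "p permutes {..n}" and l: "inv_count n p = card (Allp n)"
  shows "p = w0 n"
proof -
  have "Inv n p = Allp n" using l card_subset_eq[OF Allp_fin Inv_sub] by (simp add: ic_def)
  then have "\<forall>i<n. p (Suc i) < p i"
  proof (intro allI impI)
    fix i assume "Inv n p = Allp n" "i < n"
    then have "(i, Suc i) \<in> Inv n p" by (simp add: Allp_def)
    then show "p (Suc i) < p i" by (simp add: Inv_def)
  qed
  then have h: "\<And>k. k \<le> n \<Longrightarrow> p k = n - k" using decr_w0[OF p] by blast
  show ?thesis
    by (rule ext) (metis h atMost_iff permutes_not_in[OF p] w0_def)
qed

lemma is_w0_iff: "p permutes {..n} \<Longrightarrow> p = w0 n \<longleftrightarrow> inv_count n p = card (Allp n)"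
  using len_max len_w0 by blast



definition adjc :: "nat \<Rightarrow> ('c \<Rightarrow> 'c \<Rightarrow> nat \<Rightarrow> nat) \<Rightarrow> 'c \<Rightarrow> 'c \<Rightarrow> bool" where
  "adjc n \<delta> x z \<longleftrightarrow> (\<exists>i<n. \<delta> x z = sgen i)"

inductive gal :: "nat \<Rightarrow> 'c set \<Rightarrow> ('c \<Rightarrow> 'c \<Rightarrow> nat \<Rightarrow> nat) \<Rightarrow> 'c \<Rightarrow> 'c \<Rightarrow> nat \<Rightarrow> bool"
  for n C \<delta> where
  g0: "x \<in> C \<Longrightarrow> gal n C \<delta> x x 0"
| gS: "x \<in> C \<Longrightarrow> adjc n \<delta> x z \<Longrightarrow> gal n C \<delta> z y k \<Longrightarrow> gal n C \<delta> x y (Suc k)"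

locale bld =
  fixes n :: nat and C :: "'c set" and \<delta> :: "'c \<Rightarrow> 'c \<Rightarrow> nat \<Rightarrow> nat"
  assumes B: "building_An n C \<delta>"
begin

abbreviation "l \<equiv> inv_count n"

lemma perm: "x \<in> C \<Longrightarrow> y \<in> C \<Longrightarrow> \<delta> x y permutes {..n}"
  using B by (simp add: building_An_def)

lemma eq_id: "x \<in> C \<Longrightarrow> y \<in> C \<Longrightarrow> \<delta> x y = id \<longleftrightarrow> x = y"
  using B by (simp add: building_An_def)

lemma nonempty: "C \<noteq> {}" using B by (simp add: building_An_def)

lemma wd2:
  assumes "x \<in> C" "y \<in> C" "z \<in> C" "i < n" "\<delta> z x = sgen i"
  shows "\<delta> z y = sgen i \<circ> \<delta> x y \<or> \<delta> z y = \<delta> x y"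
    and "l (sgen i \<circ> \<delta> x y) = Suc (l (\<delta> x y)) \<Longrightarrow> \<delta> z y = sgen i \<circ> \<delta> x y"
  using B assms unfolding building_An_def by blast+

lemma wd3:
  assumes "x \<in> C" "y \<in> C" "i < n"
  shows "\<exists>z\<in>C. \<delta> z x = sgen i \<and> \<delta> z y = sgen i \<circ> \<delta> x y"
  using B assms unfolding building_An_def by blast

lemma adj_sym:
  assumes x: "x \<in> C" and y: "y \<in> C" and i: "i < n" and d: "\<delta> x y = sgen i"
  shows "\<delta> y x = sgen i"
proof -
  have "\<delta> x x = sgen i \<circ> \<delta> y x \<or> \<delta> x x = \<delta> y x" using wd2(1)[OF y x x i d] .
  moreover have "\<delta> x x = id" using eq_id x by simp
  moreover have "\<delta> y x \<noteq> id"
  proof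
    assume "\<delta> y x = id"
    then have "y = x" using eq_id x y by simp
    then show False using d eq_id x sgen_ne_id by metis
  qed
  ultimately have "sgen i \<circ> \<delta> y x = id" by metis
  then have "sgen i \<circ> (sgen i \<circ> \<delta> y x) = sgen i" by simp
  then show ?thesis by (simp add: sgen_sgen')
qed

lemma len_adj:
  assumes "x \<in> C" "y \<in> C" "z \<in> C" "adjc n \<delta> z x"
  shows "l (\<delta> z y) \<le> Suc (l (\<delta> x y))"
proof -
  obtain i where i: "i < n" "\<delta> z x = sgen i" using assms(4) by (auto simp: adjc_def)
  have "\<delta> z y = sgen i \<circ> \<delta> x y \<or> \<delta> z y = \<delta> x y" using wd2(1)[OF assms(1-3) i] .
  moreover have "l (sgen i \<circ> \<delta> x y) \<le> Suc (l (\<delta> x y))"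
    using len_step'[OF perm[OF assms(1,2)] i(1)] by auto
  ultimately show ?thesis by auto
qed

lemma gal_C: "gal n C \<delta> x y k \<Longrightarrow> x \<in> C \<and> y \<in> C"
  by (induction rule: gal.induct) auto

lemma gal_len: "gal n C \<delta> x y k \<Longrightarrow> l (\<delta> x y) \<le> k"
proof (induction rule: gal.induct)
  case (g0 x)
  then have "\<delta> x x = id" using eq_id by simp
  then show ?case using len_id[of n] by (metis le_refl)
next
  case (gS x z y k)
  have "z \<in> C" "y \<in> C" using gal_C[OF gS.hyps(3)] by auto
  then have "l (\<delta> x y) \<le> Suc (l (\<delta> z y))" using len_adj gS.hyps by blast
  then show ?case using gS.IH by simp
qed

lemma len_gal: "x \<in> C \<Longrightarrow> y \<in> C \<Longrightarrow> l (\<delta> x y) = k \<Longrightarrow> gal n C \<delta> x y k"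
proof (induction k arbitrary: x)
  case 0
  then have "\<delta> x y = id" using len0 perm by blast
  then have "x = y" using eq_id 0 by simp
  then show ?case using 0 g0 by simp
next
  case (Suc k)
  have ne: "\<delta> x y \<noteq> id" using Suc.prems len_id[of n] by (metis nat.distinct(1))
  obtain i where i: "i < n" "Suc (l (sgen i \<circ> \<delta> x y)) = l (\<delta> x y)"
    using descent_exists[OF perm[OF Suc.prems(1,2)] ne] by blast
  obtain z where z: "z \<in> C" "\<delta> z x = sgen i" "\<delta> z y = sgen i \<circ> \<delta> x y"
    using wd3[OF Suc.prems(1,2) i(1)] by blast
  have "\<delta> x z = sgen i" using adj_sym[OF z(1) Suc.prems(1) i(1) z(2)] .
  then have a: "adjc n \<delta> x z" using i(1) by (auto simp: adjc_def)
  have "l (\<delta> z y) = k" using z(3) i(2) Suc.prems(3) by simp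
  then have "gal n C \<delta> z y k" using Suc.IH[OF z(1) Suc.prems(2)] by blast
  then show ?case using gS[OF Suc.prems(1) a] by simp
qed

lemma gal_snoc: "gal n C \<delta> x y k \<Longrightarrow> adjc n \<delta> y z \<Longrightarrow> z \<in> C \<Longrightarrow> gal n C \<delta> x z (Suc k)"
proof (induction rule: gal.induct)
  case (g0 x)
  show ?case by (rule gal.gS[OF g0.hyps g0.prems(1) gal.g0[OF g0.prems(2)]])
next
  case (gS x z' y k)
  show ?case by (rule gal.gS[OF gS.hyps(1,2) gS.IH[OF gS.prems]])
qed

lemma adjc_sym: "x \<in> C \<Longrightarrow> y \<in> C \<Longrightarrow> adjc n \<delta> x y \<Longrightarrow> adjc n \<delta> y x"
  using adj_sym by (auto simp: adjc_def)

lemma gal_rev: "gal n C \<delta> x y k \<Longrightarrow> gal n C \<delta> y x k"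
proof (induction rule: gal.induct)
  case (g0 x)
  then show ?case by (rule gal.g0)
next
  case (gS x z y k)
  have "z \<in> C" using gal_C[OF gS.hyps(3)] by simp
  then show ?case using gal_snoc[OF gS.IH] adjc_sym gS.hyps by blast
qed

lemma len_sym: "x \<in> C \<Longrightarrow> y \<in> C \<Longrightarrow> l (\<delta> y x) = l (\<delta> x y)"
proof -
  assume x: "x \<in> C" and y: "y \<in> C"
  have "l (\<delta> y x) \<le> l (\<delta> x y)" using gal_len[OF gal_rev[OF len_gal[OF x y refl]]] .
  moreover have "l (\<delta> x y) \<le> l (\<delta> y x)" using gal_len[OF gal_rev[OF len_gal[OF y x refl]]] .
  ultimately show ?thesis by simp
qed

lemma opp_iff: "x \<in> C \<Longrightarrow> y \<in> C \<Longrightarrow> \<delta> x y = w0 n \<longleftrightarrow> l (\<delta> x y) = card (Allp n)"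
  using is_w0_iff perm by blast

lemma opp_sym: "x \<in> C \<Longrightarrow> y \<in> C \<Longrightarrow> \<delta> x y = w0 n \<Longrightarrow> \<delta> y x = w0 n"
proof -
  assume x: "x \<in> C" and y: "y \<in> C" and o: "\<delta> x y = w0 n"
  have "l (\<delta> x y) = card (Allp n)" using opp_iff[OF x y] o by simp
  then have "l (\<delta> y x) = card (Allp n)" using len_sym[OF x y] by simp
  then show ?thesis using opp_iff[OF y x] by simp
qed

end



context bld begin

lemma improve:
  assumes T: "thick_An n C \<delta>" and x: "x \<in> C" and y: "y \<in> C" and z: "z \<in> C"
    and ne: "\<delta> x y \<noteq> w0 n"
  shows "\<exists>x'\<in>C. l (\<delta> x' y) = Suc (l (\<delta> x y)) \<and> l (\<delta> x z) \<le> l (\<delta> x' z)"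
proof -
  obtain j where j: "j < n" "l (sgen j \<circ> \<delta> x y) = Suc (l (\<delta> x y))"
    using ascent_exists[OF perm[OF x y] ne] by blast
  obtain a b where ab: "a \<in> C" "b \<in> C" "a \<noteq> b" "\<delta> x a = sgen j" "\<delta> x b = sgen j"
    using T x j(1) unfolding thick_An_def by blast
  have ax: "\<delta> a x = sgen j" using adj_sym[OF x ab(1) j(1) ab(4)] .
  have bx: "\<delta> b x = sgen j" using adj_sym[OF x ab(2) j(1) ab(5)] .
  have ay: "\<delta> a y = sgen j \<circ> \<delta> x y" using wd2(2)[OF x y ab(1) j(1) ax j(2)] .
  have by': "\<delta> b y = sgen j \<circ> \<delta> x y" using wd2(2)[OF x y ab(2) j(1) bx j(2)] .
  define u where "u = \<delta> x z"
  show ?thesis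
  proof (cases "l (sgen j \<circ> u) = Suc (l u)")
    case True
    have "\<delta> a z = sgen j \<circ> u" using wd2(2)[OF x z ab(1) j(1) ax] True u_def by simp
    then have "l (\<delta> x z) \<le> l (\<delta> a z)" using True u_def by simp
    moreover have "l (\<delta> a y) = Suc (l (\<delta> x y))" using ay j(2) by simp
    ultimately show ?thesis using ab(1) by blast
  next
    case False
    then have dn: "Suc (l (sgen j \<circ> u)) = l u" using len_step'[OF perm[OF x z] j(1)] u_def by auto
    have az: "\<delta> a z = sgen j \<circ> u \<or> \<delta> a z = u" using wd2(1)[OF x z ab(1) j(1) ax] u_def by simp
    have bz: "\<delta> b z = sgen j \<circ> u \<or> \<delta> b z = u" using wd2(1)[OF x z ab(2) j(1) bx] u_def by simp
    show ?thesis
    proof (cases "\<delta> a z = u")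
      case True
      then have "l (\<delta> x z) \<le> l (\<delta> a z)" using u_def by simp
      moreover have "l (\<delta> a y) = Suc (l (\<delta> x y))" using ay j(2) by simp
      ultimately show ?thesis using ab(1) by blast
    next
      case Fa: False
      show ?thesis
      proof (cases "\<delta> b z = u")
        case True
        then have "l (\<delta> x z) \<le> l (\<delta> b z)" using u_def by simp
        moreover have "l (\<delta> b y) = Suc (l (\<delta> x y))" using by' j(2) by simp
        ultimately show ?thesis using ab(2) by blast
      next
        case Fb: False
        have az': "\<delta> a z = sgen j \<circ> u" using az Fa by simp
        have bz': "\<delta> b z = sgen j \<circ> u" using bz Fb by simp
        have "\<delta> a b = sgen j \<circ> \<delta> x b \<or> \<delta> a b = \<delta> x b" using wd2(1)[OF x ab(2) ab(1) j(1) ax] .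
        then have "\<delta> a b = id \<or> \<delta> a b = sgen j" using ab(5) sgen_sgen by simp
        moreover have "\<delta> a b \<noteq> id" using eq_id[OF ab(1) ab(2)] ab(3) by simp
        ultimately have abj: "\<delta> a b = sgen j" by simp
        have ba: "\<delta> b a = sgen j" using adj_sym[OF ab(1) ab(2) j(1) abj] .
        have "l (sgen j \<circ> \<delta> a z) = Suc (l (\<delta> a z))" using az' dn by (simp add: sgen_sgen')
        then have "\<delta> b z = sgen j \<circ> \<delta> a z" using wd2(2)[OF ab(1) z ab(2) j(1) ba] by simp
        then have "\<delta> b z = u" using az' by (simp add: sgen_sgen')
        then show ?thesis using Fb by simp
      qed
    qed
  qed
qed

lemma common_opp:
  assumes T: "thick_An n C \<delta>" and y: "y \<in> C" and z: "z \<in> C"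
  shows "\<exists>x\<in>C. \<delta> x y = w0 n \<and> \<delta> x z = w0 n"
proof -
  define f where "f x = l (\<delta> x y) + l (\<delta> x z)" for x
  have bd: "\<forall>x. x \<in> C \<longrightarrow> f x < Suc (2 * card (Allp n))"
  proof (intro allI impI)
    fix x
    have "l (\<delta> x y) \<le> card (Allp n)" "l (\<delta> x z) \<le> card (Allp n)" using len_le by auto
    then show "f x < Suc (2 * card (Allp n))" by (simp add: f_def)
  qed
  obtain x where x: "x \<in> C" "\<forall>x'. x' \<in> C \<longrightarrow> f x' \<le> f x"
    using Lattices_Big.ex_has_greatest_nat[of "\<lambda>x. x \<in> C", OF y bd] by blast
  have "\<delta> x y = w0 n"
  proof (rule ccontr)
    assume "\<delta> x y \<noteq> w0 n"
    then obtain x' where "x' \<in> C" "l (\<delta> x' y) = Suc (l (\<delta> x y))" "l (\<delta> x z) \<le> l (\<delta> x' z)"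
      using improve[OF T x(1) y z] by blast
    then have "f x < f x'" by (simp add: f_def)
    then show False using x \<open>x' \<in> C\<close> by (meson not_le)
  qed
  moreover have "\<delta> x z = w0 n"
  proof (rule ccontr)
    assume "\<delta> x z \<noteq> w0 n"
    then obtain x' where "x' \<in> C" "l (\<delta> x' z) = Suc (l (\<delta> x z))" "l (\<delta> x y) \<le> l (\<delta> x' y)"
      using improve[OF T x(1) z y] by blast
    then have "f x < f x'" by (simp add: f_def)
    then show False using x \<open>x' \<in> C\<close> by (meson not_le)
  qed
  ultimately show ?thesis using x(1) by blast
qed

end



theorem lemma3p7:
  fixes n :: nat and C1 :: "'a set" and C2 :: "'b set"
    and \<delta>1 :: "'a \<Rightarrow> 'a \<Rightarrow> nat \<Rightarrow> nat" and \<delta>2 :: "'b \<Rightarrow> 'b \<Rightarrow> nat \<Rightarrow> nat"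
    and \<phi> :: "'a \<times> 'b \<Rightarrow> 'a \<times> 'b" and \<sigma> :: "nat + nat \<Rightarrow> nat + nat"
  assumes "n \<ge> 1"
    and "building_An n C1 \<delta>1" and "thick_An n C1 \<delta>1"
    and "building_An n C2 \<delta>2" and "thick_An n C2 \<delta>2"
    and "prod_aut n C1 \<delta>1 C2 \<delta>2 \<phi> \<sigma>"
    and "\<sigma> ` (Inl ` {..<n}) = Inr ` {..<n}"
    and "\<forall>t\<in>prod_types n. \<sigma> (\<sigma> t) = t"
  shows "\<not> prod_domestic n C1 \<delta>1 C2 \<delta>2 \<phi>"
proof
  assume dom: "prod_domestic n C1 \<delta>1 C2 \<delta>2 \<phi>"
  interpret B1: bld n C1 \<delta>1 using assms(2) by unfold_locales
  interpret B2: bld n C2 \<delta>2 using assms(4) by unfold_locales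
  obtain c1 where c1: "c1 \<in> C1" using B1.nonempty by blast
  obtain c2 where c2: "c2 \<in> C2" using B2.nonempty by blast
  have bij: "bij_betw \<phi> (C1 \<times> C2) (C1 \<times> C2)" using assms(6) by (simp add: prod_aut_def)
  have adjiff: "\<And>x y t. x \<in> C1 \<times> C2 \<Longrightarrow> y \<in> C1 \<times> C2 \<Longrightarrow> t \<in> prod_types n \<Longrightarrow>
      prod_adj \<delta>1 \<delta>2 t x y \<longleftrightarrow> prod_adj \<delta>1 \<delta>2 (\<sigma> t) (\<phi> x) (\<phi> y)"
    using assms(6) unfolding prod_aut_def by blast
  have sL: "\<exists>j<n. \<sigma> (Inl i) = Inr j" if "i < n" for i
  proof -
    have "\<sigma> (Inl i) \<in> \<sigma> ` (Inl ` {..<n})" using that by simp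
    then have "\<sigma> (Inl i) \<in> Inr ` {..<n}" unfolding assms(7) .
    then show ?thesis by auto
  qed
  have sR: "\<And>j. j < n \<Longrightarrow> \<exists>i<n. \<sigma> (Inl i) = Inr j \<and> \<sigma> (Inr j) = Inl i"
  proof -
    fix j assume j: "j < n"
    then have "Inr j \<in> \<sigma> ` (Inl ` {..<n})" unfolding assms(7) by simp
    then obtain t where t: "t \<in> Inl ` {..<n}" "\<sigma> t = Inr j" by (rule imageE) simp
    then obtain i where i: "i < n" "\<sigma> (Inl i) = Inr j" by auto
    have "Inl i \<in> prod_types n" using i by (simp add: prod_types_def)
    then have "\<sigma> (\<sigma> (Inl i)) = Inl i" using assms(8) by blast
    then have "\<sigma> (Inr j) = Inl i" using i(2) by simp
    then show "\<exists>i<n. \<sigma> (Inl i) = Inr j \<and> \<sigma> (Inr j) = Inl i" using i by blast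
  qed
  have phiC: "\<And>x. x \<in> C1 \<times> C2 \<Longrightarrow> \<phi> x \<in> C1 \<times> C2" using bij_betwE[OF bij] by blast
  have stepA: "gal n C1 \<delta>1 a b k \<Longrightarrow> x2 \<in> C2 \<Longrightarrow> fst (\<phi> (a, x2)) = fst (\<phi> (b, x2))" for a b k x2
  proof (induction rule: gal.induct)
    case (g0 x) then show ?case by simp
  next
    case (gS x z y k)
    obtain i where i: "i < n" "\<delta>1 x z = sgen i" using gS.hyps(2) by (auto simp: adjc_def)
    have zC: "z \<in> C1" using B1.gal_C[OF gS.hyps(3)] by simp
    have "prod_adj \<delta>1 \<delta>2 (Inl i) (x, x2) (z, x2)" using i by simp
    moreover have "Inl i \<in> prod_types n" using i by (simp add: prod_types_def)
    ultimately have "prod_adj \<delta>1 \<delta>2 (\<sigma> (Inl i)) (\<phi> (x, x2)) (\<phi> (z, x2))"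
      using adjiff gS.hyps(1) zC gS.prems by blast
    moreover obtain j where "\<sigma> (Inl i) = Inr j" using sL i by blast
    ultimately have "fst (\<phi> (x, x2)) = fst (\<phi> (z, x2))" by simp
    then show ?case using gS.IH gS.prems by simp
  qed
  have stepB: "gal n C2 \<delta>2 a b k \<Longrightarrow> x1 \<in> C1 \<Longrightarrow> snd (\<phi> (x1, a)) = snd (\<phi> (x1, b))" for a b k x1
  proof (induction rule: gal.induct)
    case (g0 x) then show ?case by simp
  next
    case (gS x z y k)
    obtain j where j: "j < n" "\<delta>2 x z = sgen j" using gS.hyps(2) by (auto simp: adjc_def)
    have zC: "z \<in> C2" using B2.gal_C[OF gS.hyps(3)] by simp
    have "prod_adj \<delta>1 \<delta>2 (Inr j) (x1, x) (x1, z)" using j by simp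
    moreover have "Inr j \<in> prod_types n" using j by (simp add: prod_types_def)
    ultimately have "prod_adj \<delta>1 \<delta>2 (\<sigma> (Inr j)) (\<phi> (x1, x)) (\<phi> (x1, z))"
      using adjiff gS.hyps(1) zC gS.prems by blast
    moreover obtain i where "\<sigma> (Inr j) = Inl i" using sR j by blast
    ultimately have "snd (\<phi> (x1, x)) = snd (\<phi> (x1, z))" by simp
    then show ?case using gS.IH gS.prems by simp
  qed
  define F where "F x2 = fst (\<phi> (c1, x2))" for x2
  define G where "G x1 = snd (\<phi> (x1, c2))" for x1
  have phi_eq: "\<phi> (x1, x2) = (F x2, G x1)" if "x1 \<in> C1" "x2 \<in> C2" for x1 x2
  proof -
    have "fst (\<phi> (x1, x2)) = fst (\<phi> (c1, x2))"
      using stepA[OF B1.len_gal[OF that(1) c1 refl] that(2)] .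
    moreover have "snd (\<phi> (x1, x2)) = snd (\<phi> (x1, c2))"
      using stepB[OF B2.len_gal[OF that(2) c2 refl] that(1)] .
    ultimately show ?thesis by (simp add: F_def G_def prod_eq_iff)
  qed
  have GC: "G a \<in> C2" if "a \<in> C1" for a using phiC[of "(a, c2)"] that c2 by (auto simp: G_def)
  have FC: "F b \<in> C1" if "b \<in> C2" for b using phiC[of "(c1, b)"] that c1 by (auto simp: F_def)
  have Gsurj: "\<exists>a\<in>C1. G a = y" if "y \<in> C2" for y
  proof -
    have "(c1, y) \<in> \<phi> ` (C1 \<times> C2)" using bij that c1 by (simp add: bij_betw_def)
    then obtain a b where ab: "a \<in> C1" "b \<in> C2" "\<phi> (a, b) = (c1, y)" by auto
    then show ?thesis using phi_eq[OF ab(1,2)] by auto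
  qed
  have inj: "inj_on \<phi> (C1 \<times> C2)" using bij by (simp add: bij_betw_def)
  have Gadj: "adjc n \<delta>2 (G a) (G b)" if ab: "a \<in> C1" "b \<in> C1" "adjc n \<delta>1 a b" for a b
  proof -
    obtain i where i: "i < n" "\<delta>1 a b = sgen i" using ab(3) by (auto simp: adjc_def)
    have "prod_adj \<delta>1 \<delta>2 (Inl i) (a, c2) (b, c2)" using i by simp
    moreover have "Inl i \<in> prod_types n" using i by (simp add: prod_types_def)
    ultimately have pa: "prod_adj \<delta>1 \<delta>2 (\<sigma> (Inl i)) (F c2, G a) (F c2, G b)"
      using adjiff ab c2 phi_eq by (metis mem_Sigma_iff)
    obtain j where j: "j < n" "\<sigma> (Inl i) = Inr j" using sL i by blast
    have "a \<noteq> b" using i B1.eq_id ab sgen_ne_id by metis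
    then have "\<phi> (a, c2) \<noteq> \<phi> (b, c2)" using inj ab c2 by (auto simp: inj_on_def)
    then have "G a \<noteq> G b" using phi_eq ab c2 by simp
    then have "\<delta>2 (G a) (G b) \<noteq> id" using B2.eq_id GC ab by simp
    then have "\<delta>2 (G a) (G b) = sgen j" using pa j by simp
    then show ?thesis using j by (auto simp: adjc_def)
  qed
  have Gadj': "adjc n \<delta>1 a b" if ab: "a \<in> C1" "b \<in> C1" "adjc n \<delta>2 (G a) (G b)" for a b
  proof -
    obtain j where j: "j < n" "\<delta>2 (G a) (G b) = sgen j" using ab(3) by (auto simp: adjc_def)
    obtain i where i: "i < n" "\<sigma> (Inl i) = Inr j" "\<sigma> (Inr j) = Inl i" using sR j by blast
    have "prod_adj \<delta>1 \<delta>2 (\<sigma> (Inl i)) (\<phi> (a, c2)) (\<phi> (b, c2))"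
      using phi_eq ab c2 i j by simp
    moreover have "Inl i \<in> prod_types n" using i by (simp add: prod_types_def)
    ultimately have pa: "prod_adj \<delta>1 \<delta>2 (Inl i) (a, c2) (b, c2)"
      using adjiff ab c2 by (metis mem_Sigma_iff)
    have "G a \<noteq> G b" using j B2.eq_id GC ab sgen_ne_id by metis
    then have "a \<noteq> b" by auto
    then have "\<delta>1 a b \<noteq> id" using B1.eq_id ab by simp
    then have "\<delta>1 a b = sgen i" using pa by simp
    then show ?thesis using i by (auto simp: adjc_def)
  qed
  have galG: "gal n C1 \<delta>1 a b k \<Longrightarrow> gal n C2 \<delta>2 (G a) (G b) k" for a b k
  proof (induction rule: gal.induct)
    case (g0 x) then show ?case using GC gal.g0 by metis
  next
    case (gS x z y k)
    have "z \<in> C1" using B1.gal_C[OF gS.hyps(3)] by simp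
    then show ?case using gal.gS[OF GC[OF gS.hyps(1)] Gadj[OF gS.hyps(1) _ gS.hyps(2)] gS.IH] by simp
  qed
  have galG': "gal n C2 \<delta>2 p q k \<Longrightarrow> a \<in> C1 \<Longrightarrow> b \<in> C1 \<Longrightarrow> p = G a \<Longrightarrow> q = G b \<Longrightarrow>
      gal n C1 \<delta>1 a b k" for p q k a b
  proof (induction arbitrary: a rule: gal.induct)
    case (g0 x)
    then have "\<phi> (a, c2) = \<phi> (b, c2)" using phi_eq c2 by simp
    then have "a = b" using inj g0 c2 by (auto simp: inj_on_def)
    then show ?case using gal.g0 g0 by metis
  next
    case (gS x z y k)
    have "z \<in> C2" using B2.gal_C[OF gS.hyps(3)] by simp
    then obtain c where c: "c \<in> C1" "G c = z" using Gsurj by blast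
    have "adjc n \<delta>1 a c" using Gadj'[OF gS.prems(1) c(1)] gS.hyps(2) gS.prems(3) c(2) by simp
    moreover have "gal n C1 \<delta>1 c b k" using gS.IH[OF c(1) gS.prems(2)] c(2) gS.prems(4) by simp
    ultimately show ?case using gal.gS gS.prems(1) by metis
  qed
  have lenG: "inv_count n (\<delta>2 (G a) (G b)) = inv_count n (\<delta>1 a b)" if "a \<in> C1" "b \<in> C1" for a b
  proof -
    have "inv_count n (\<delta>2 (G a) (G b)) \<le> inv_count n (\<delta>1 a b)"
      using B2.gal_len[OF galG[OF B1.len_gal[OF that refl]]] .
    moreover have "inv_count n (\<delta>1 a b) \<le> inv_count n (\<delta>2 (G a) (G b))"
      using B1.gal_len[OF galG'[OF B2.len_gal[OF GC[OF that(1)] GC[OF that(2)] refl] that refl refl]] .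
    ultimately show ?thesis by simp
  qed
  have oppG: "\<delta>2 (G a) (G b) = w0 n" if "a \<in> C1" "b \<in> C1" "\<delta>1 a b = w0 n" for a b
    using B1.opp_iff B2.opp_iff lenG GC that by metis
  define y where "y = F c2"
  have yC: "y \<in> C1" using FC c2 y_def by simp
  obtain a where a: "a \<in> C1" "G a = c2" using Gsurj c2 by blast
  obtain x1 where x1: "x1 \<in> C1" "\<delta>1 x1 y = w0 n" "\<delta>1 x1 a = w0 n"
    using B1.common_opp[OF assms(3) yC a(1)] by blast
  have "\<delta>2 (G x1) c2 = w0 n" using oppG[OF x1(1) a(1) x1(3)] a(2) by simp
  then have "\<delta>2 c2 (G x1) = w0 n" using B2.opp_sym GC x1(1) c2 by blast
  then have "prod_opp n \<delta>1 \<delta>2 (x1, c2) (\<phi> (x1, c2))"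
    using phi_eq[OF x1(1) c2] x1(2) y_def by (simp add: prod_opp_def)
  then show False using dom x1(1) c2 by (auto simp: prod_domestic_def)
qed

end
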